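(* For every vertex-coloured interval graph $G^c$ with the notation below, $$\gamma^t(G^c)=\min\{f(S,i)+|C\setminus S| \;:\; S\subseteq C,\ i\in V,\ [1,i]\text{ dominates }G^c\}.$$
   Context: $G^c$ is a vertex-coloured interval graph with vertex set $V=\{1,\dots,n\}$, colour set $C$ (each vertex has exactly one colour $c(v)$, every colour used), and a fixed interval representation $I_i=[l_i,r_i]$ (vertices adjacent iff intervals intersect), with vertices numbered so that $r_1\le r_2\le\dots\le r_n$. For $a\le b$, $[a,b]$ denotes the vertex set $\{i\in V: a\le i\le b\}$. A set is dominating (of a vertex set $X$) if every vertex (of $X$) is in it or adjacent to a vertex of it. An $i$-prefix dominating set is a set $U\subseteq V$ with $i\in U$ that dominates $[1,i]$. $U$ is proper if there are no distinct $i,j\in U$ with $I_i\subseteq I_j$. For $S\subseteq C$ and $i\in V$, $f(S,i)$ is the minimum size of a proper $i$-prefix dominating set whose set of colours is exactly $S$ (or $\infty$ if none exists); $f(S,0)=0$ if $S=\emptyset$ and $\infty$ otherwise. A tropical dominating set is a dominating set containing every colour; $\gamma^t(G^c)$ is its minimum size. *)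

theory Defs
  imports Main "HOL-Library.Extended_Nat"
begin

text \<open>A vertex-coloured interval graph on the vertex set {1..n}: vertex i is
represented by the closed real interval [l i, r i], vertices are numbered so that
right endpoints are non-decreasing, vertex i has colour c i, and C is the set of
colours (every colour is used).\<close>

definition coloured_interval_graph ::
  "nat \<Rightarrow> (nat \<Rightarrow> real) \<Rightarrow> (nat \<Rightarrow> real) \<Rightarrow> (nat \<Rightarrow> 'c) \<Rightarrow> 'c set \<Rightarrow> bool" where
  "coloured_interval_graph n l r c C \<longleftrightarrow>
     (\<forall>i\<in>{1..n}. l i \<le> r i) \<and>
     (\<forall>i\<in>{1..n}. \<forall>j\<in>{1..n}. i \<le> j \<longrightarrow> r i \<le> r j) \<and>
     c ` {1..n} = C"

definition ivl :: "(nat \<Rightarrow> real) \<Rightarrow> (nat \<Rightarrow> real) \<Rightarrow> nat \<Rightarrow> real set" where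
  "ivl l r i = {l i .. r i}"

definition adj :: "(nat \<Rightarrow> real) \<Rightarrow> (nat \<Rightarrow> real) \<Rightarrow> nat \<Rightarrow> nat \<Rightarrow> bool" where
  "adj l r u v \<longleftrightarrow> u \<noteq> v \<and> ivl l r u \<inter> ivl l r v \<noteq> {}"

definition dominates ::
  "(nat \<Rightarrow> real) \<Rightarrow> (nat \<Rightarrow> real) \<Rightarrow> nat set \<Rightarrow> nat set \<Rightarrow> bool" where
  "dominates l r D X \<longleftrightarrow> (\<forall>x\<in>X. x \<in> D \<or> (\<exists>y\<in>D. adj l r x y))"

definition proper_set :: "(nat \<Rightarrow> real) \<Rightarrow> (nat \<Rightarrow> real) \<Rightarrow> nat set \<Rightarrow> bool" where
  "proper_set l r U \<longleftrightarrow> \<not> (\<exists>i\<in>U. \<exists>j\<in>U. i \<noteq> j \<and> ivl l r i \<subseteq> ivl l r j)"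

definition prefix_dominating ::
  "nat \<Rightarrow> (nat \<Rightarrow> real) \<Rightarrow> (nat \<Rightarrow> real) \<Rightarrow> nat \<Rightarrow> nat set \<Rightarrow> bool" where
  "prefix_dominating n l r i U \<longleftrightarrow> U \<subseteq> {1..n} \<and> i \<in> U \<and> dominates l r U {1..i}"

text \<open>f(S,i), with value \<infinity> (Inf of the empty set of enat) if no such set exists.\<close>
definition fS ::
  "nat \<Rightarrow> (nat \<Rightarrow> real) \<Rightarrow> (nat \<Rightarrow> real) \<Rightarrow> (nat \<Rightarrow> 'c) \<Rightarrow> 'c set \<Rightarrow> nat \<Rightarrow> enat" where
  "fS n l r c S i =
     (if i = 0 then (if S = {} then 0 else \<infinity>)
      else Inf {enat (card U) | U. prefix_dominating n l r i U \<and> proper_set l r U \<and> c ` U = S})"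

definition tropical_domination_number ::
  "nat \<Rightarrow> (nat \<Rightarrow> real) \<Rightarrow> (nat \<Rightarrow> real) \<Rightarrow> (nat \<Rightarrow> 'c) \<Rightarrow> 'c set \<Rightarrow> enat" where
  "tropical_domination_number n l r c C =
     Inf {enat (card D) | D. D \<subseteq> {1..n} \<and> dominates l r D {1..n} \<and> C \<subseteq> c ` D}"

end

theory Submission
  imports Defs
begin

lemma enat_Inf_in: "(A::enat set) \<noteq> {} \<Longrightarrow> Inf A \<in> A"
  unfolding Inf_enat_def by (auto intro: LeastI)

lemma dir1:
  fixes n :: nat and l r :: "nat \<Rightarrow> real" and c :: "nat \<Rightarrow> 'c" and C :: "'c set"
  assumes G: "coloured_interval_graph n l r c C"
    and S: "S \<subseteq> C" and i: "i \<in> {1..n}" and dom: "dominates l r {1..i} {1..n}"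
  shows "tropical_domination_number n l r c C \<le> fS n l r c S i + enat (card (C - S))"
proof (cases "fS n l r c S i = \<infinity>")
  case True then show ?thesis by simp
next
  case False
  have lr: "\<And>x. x \<in> {1..n} \<Longrightarrow> l x \<le> r x" and mono: "\<And>x y. x \<in> {1..n} \<Longrightarrow> y \<in> {1..n} \<Longrightarrow> x \<le> y \<Longrightarrow> r x \<le> r y"
    and Cim: "c ` {1..n} = C" using G unfolding coloured_interval_graph_def by auto
  let ?A = "{enat (card U) | U. prefix_dominating n l r i U \<and> proper_set l r U \<and> c ` U = S}"
  have i0: "i \<noteq> 0" using i by auto
  have fe: "fS n l r c S i = Inf ?A" using i0 unfolding fS_def by simp
  have "?A \<noteq> {}"
  proof
    assume "?A = {}"
    then have "Inf ?A = \<infinity>" by (simp add: Inf_enat_def)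
    then show False using False fe by simp
  qed
  then have "Inf ?A \<in> ?A" by (rule enat_Inf_in)
  then obtain U where U: "prefix_dominating n l r i U" "c ` U = S" and fU: "fS n l r c S i = enat (card U)"
    using fe by auto
  have Un: "U \<subseteq> {1..n}" "i \<in> U" "dominates l r U {1..i}" using U unfolding prefix_dominating_def by auto
  define g where "g = (\<lambda>s. SOME x. x \<in> {1..n} \<and> c x = s)"
  have g: "\<And>s. s \<in> C \<Longrightarrow> g s \<in> {1..n} \<and> c (g s) = s"
  proof -
    fix s assume "s \<in> C"
    then have "\<exists>x. x \<in> {1..n} \<and> c x = s" using Cim by blast
    then show "g s \<in> {1..n} \<and> c (g s) = s" unfolding g_def by (rule someI_ex)
  qed
  define D where "D = U \<union> g ` (C - S)"
  have finC: "finite C" using Cim by auto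
  have finU: "finite U" using Un(1) finite_subset by blast
  have Dsub: "D \<subseteq> {1..n}" unfolding D_def using Un(1) g by blast
  have Dcol: "C \<subseteq> c ` D"
  proof
    fix s assume s: "s \<in> C"
    show "s \<in> c ` D"
    proof (cases "s \<in> S")
      case True then show ?thesis using U(2) unfolding D_def by auto
    next
      case False then have "g s \<in> D" unfolding D_def using s by auto
      then show ?thesis using g[OF s] by (metis image_eqI)
    qed
  qed
  have Ddom: "dominates l r D {1..n}"
    unfolding dominates_def
  proof
    fix x assume x: "x \<in> {1..n}"
    show "x \<in> D \<or> (\<exists>y\<in>D. adj l r x y)"
    proof (cases "x \<le> i")
      case True
      then have "x \<in> {1..i}" using x by auto
      then have "x \<in> U \<or> (\<exists>y\<in>U. adj l r x y)" using Un(3) unfolding dominates_def by auto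
      then show ?thesis unfolding D_def by auto
    next
      case False
      then have "x \<notin> {1..i}" by auto
      then obtain k where k: "k \<in> {1..i}" "adj l r x k" using dom x unfolding dominates_def by auto
      have t: "l x \<le> r k" using k(2) unfolding adj_def ivl_def by auto
      have kn: "k \<in> {1..n}" using k(1) i by auto
      have "r k \<le> r i" using mono[OF kn i] k(1) by auto
      moreover have "r i \<le> r x" using mono[OF i x] False by auto
      moreover have "l i \<le> r i" using lr[OF i] .
      ultimately have "r i \<in> ivl l r x \<inter> ivl l r i" using t unfolding ivl_def by auto
      then have "adj l r x i" using False unfolding adj_def by auto
      then show ?thesis using Un(2) unfolding D_def by auto
    qed
  qed
  have "tropical_domination_number n l r c C \<le> enat (card D)"
    unfolding tropical_domination_number_def by (rule Inf_lower) (use Dsub Ddom Dcol in blast)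
  also have "card D \<le> card U + card (C - S)"
  proof -
    have "card D \<le> card U + card (g ` (C - S))" unfolding D_def by (rule card_Un_le)
    also have "card (g ` (C - S)) \<le> card (C - S)" using finC by (simp add: card_image_le)
    finally show ?thesis by simp
  qed
  then have "enat (card D) \<le> enat (card U) + enat (card (C - S))" by simp
  finally show ?thesis using fU by simp
qed

lemma dir2:
  fixes n :: nat and l r :: "nat \<Rightarrow> real" and c :: "nat \<Rightarrow> 'c" and C :: "'c set"
  assumes G: "coloured_interval_graph n l r c C" and n1: "n \<ge> 1"
    and D: "D \<subseteq> {1..n}" "dominates l r D {1..n}" "C \<subseteq> c ` D"
  shows "Inf {fS n l r c S i + enat (card (C - S)) | S i.
           S \<subseteq> C \<and> i \<in> {1..n} \<and> dominates l r {1..i} {1..n}} \<le> enat (card D)"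
proof -
  have lr: "\<And>x. x \<in> {1..n} \<Longrightarrow> l x \<le> r x"
    and Cim: "c ` {1..n} = C" using G unfolding coloured_interval_graph_def by auto
  have finD: "finite D" using D(1) finite_subset by blast
  let ?P = "\<lambda>E. E \<subseteq> D \<and> (\<forall>x\<in>D. \<exists>y\<in>E. ivl l r x \<subseteq> ivl l r y)"
  have "?P D" by auto
  then obtain E where E: "?P E" and Emin: "\<And>F. ?P F \<Longrightarrow> card E \<le> card F"
    using ex_has_least_nat[of ?P D card] by blast
  have finE: "finite E" using E finD finite_subset by blast
  have En: "E \<subseteq> {1..n}" using E D(1) by auto
  have propE: "proper_set l r E"
    unfolding proper_set_def
  proof
    assume "\<exists>i\<in>E. \<exists>j\<in>E. i \<noteq> j \<and> ivl l r i \<subseteq> ivl l r j"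
    then obtain a b where ab: "a \<in> E" "b \<in> E" "a \<noteq> b" "ivl l r a \<subseteq> ivl l r b" by blast
    have "?P (E - {a})"
    proof -
      have "\<forall>x\<in>D. \<exists>y\<in>E - {a}. ivl l r x \<subseteq> ivl l r y"
      proof
        fix x assume "x \<in> D"
        then obtain y where y: "y \<in> E" "ivl l r x \<subseteq> ivl l r y" using E by blast
        show "\<exists>y\<in>E - {a}. ivl l r x \<subseteq> ivl l r y"
        proof (cases "y = a")
          case True then show ?thesis using ab y by (intro bexI[of _ b]) auto
        next
          case False then show ?thesis using y by auto
        qed
      qed
      then show ?thesis using E by auto
    qed
    then have "card E \<le> card (E - {a})" by (rule Emin)
    moreover have "card (E - {a}) < card E" using finE ab(1) by (rule card_Diff1_less)
    ultimately show False by simp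
  qed
  have Edom: "dominates l r E {1..n}"
    unfolding dominates_def
  proof
    fix x assume x: "x \<in> {1..n}"
    have nex: "ivl l r x \<noteq> {}" using lr[OF x] unfolding ivl_def by auto
    from D(2) x have "x \<in> D \<or> (\<exists>y\<in>D. adj l r x y)" unfolding dominates_def by auto
    then obtain z where z: "z \<in> E" "ivl l r x \<inter> ivl l r z \<noteq> {}"
    proof
      assume "x \<in> D"
      then obtain y where "y \<in> E" "ivl l r x \<subseteq> ivl l r y" using E by blast
      then show ?thesis using that nex by blast
    next
      assume "\<exists>y\<in>D. adj l r x y"
      then obtain y where y: "y \<in> D" "adj l r x y" by blast
      then obtain z where "z \<in> E" "ivl l r y \<subseteq> ivl l r z" using E by blast
      then show ?thesis using that y(2) unfolding adj_def by blast
    qed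
    show "x \<in> E \<or> (\<exists>y\<in>E. adj l r x y)"
      using z unfolding adj_def by auto
  qed
  have "1 \<in> {1..n}" using n1 by auto
  then have "D \<noteq> {}" using D(2) unfolding dominates_def by auto
  then have Ene: "E \<noteq> {}" using E by blast
  define i where "i = Max E"
  have iE: "i \<in> E" unfolding i_def using finE Ene by simp
  have ile: "\<And>x. x \<in> E \<Longrightarrow> x \<le> i" unfolding i_def using finE by simp
  have iN: "i \<in> {1..n}" using iE En by auto
  have E1i: "E \<subseteq> {1..i}" using ile En by auto
  have domi: "dominates l r {1..i} {1..n}" using Edom E1i unfolding dominates_def by blast
  define S where "S = c ` E"
  have SC: "S \<subseteq> C" unfolding S_def using En Cim by auto
  have pd: "prefix_dominating n l r i E"
    unfolding prefix_dominating_def using En iE Edom iN unfolding dominates_def by auto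
  have a: "fS n l r c S i \<le> enat (card E)"
    unfolding fS_def using iN pd propE by (auto simp: S_def intro!: Inf_lower)
  have b: "card (C - S) + card E \<le> card D"
  proof -
    have "C - S \<subseteq> c ` (D - E)" using D(3) unfolding S_def by auto
    then have "card (C - S) \<le> card (c ` (D - E))" using finD by (simp add: card_mono)
    also have "\<dots> \<le> card (D - E)" using finD by (simp add: card_image_le)
    also have "\<dots> = card D - card E" using E finE by (simp add: card_Diff_subset)
    finally have "card (C - S) \<le> card D - card E" .
    moreover have "card E \<le> card D" using card_mono[OF finD] E by blast
    ultimately show ?thesis by linarith
  qed
  have "fS n l r c S i + enat (card (C - S)) \<le> enat (card D)"
  proof -
    have "fS n l r c S i + enat (card (C - S)) \<le> enat (card E) + enat (card (C - S))"
      using a by (rule add_right_mono)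
    also have "\<dots> = enat (card E + card (C - S))" by simp
    also have "\<dots> \<le> enat (card D)" using b by simp
    finally show ?thesis .
  qed
  moreover have "Inf {fS n l r c S i + enat (card (C - S)) | S i.
           S \<subseteq> C \<and> i \<in> {1..n} \<and> dominates l r {1..i} {1..n}} \<le> fS n l r c S i + enat (card (C - S))"
    using SC iN domi by (auto intro!: Inf_lower)
  ultimately show ?thesis by (rule order_trans[rotated])
qed

theorem mainTheorem18:
  fixes n :: nat and l r :: "nat \<Rightarrow> real" and c :: "nat \<Rightarrow> 'c" and C :: "'c set"
  assumes "coloured_interval_graph n l r c C"
    and "n \<ge> 1"
  shows "tropical_domination_number n l r c C =
    Inf {fS n l r c S i + enat (card (C - S)) | S i.
           S \<subseteq> C \<and> i \<in> {1..n} \<and> dominates l r {1..i} {1..n}}"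
proof (rule antisym)
  show "tropical_domination_number n l r c C \<le> Inf {fS n l r c S i + enat (card (C - S)) | S i.
           S \<subseteq> C \<and> i \<in> {1..n} \<and> dominates l r {1..i} {1..n}}"
    by (rule Inf_greatest) (use dir1[OF assms(1)] in blast)
  show "Inf {fS n l r c S i + enat (card (C - S)) | S i.
           S \<subseteq> C \<and> i \<in> {1..n} \<and> dominates l r {1..i} {1..n}} \<le> tropical_domination_number n l r c C"
    unfolding tropical_domination_number_def
    by (rule Inf_greatest) (use dir2[OF assms] in blast)
qed

end
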